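(* Among all $4\times4$ unimodular zerofree matrices $M$, the minimum of $\|(M\;M^{-1})\|$ is $2$. It is attained by $$M=\begin{pmatrix}1&1&1&2\\1&1&2&1\\1&2&2&2\\2&1&2&2\end{pmatrix},\ M^{-1}=\begin{pmatrix}-2&-2&1&2\\-2&-2&2&1\\1&2&-1&-1\\2&1&-1&-1\end{pmatrix}$$ and by $$\tilde M=\begin{pmatrix}1&1&1&2\\-1&1&2&-1\\-2&1&2&-2\\1&2&2&2\end{pmatrix},\ \tilde M^{-1}=\begin{pmatrix}-2&2&-2&1\\-2&-2&1&2\\1&2&-1&-1\\2&-1&1&-1\end{pmatrix},$$ and $M$ and $\tilde M$ are not equivalent.
   Context: A square integer matrix is unimodular if its determinant is $\pm1$. An invertible matrix $Z$ is zerofree if none of the entries of $Z$ and none of the entries of $Z^{-1}$ is zero. For a matrix $A$, $\|A\|$ denotes the maximum of the absolute values of its entries. $(M\;M^{-1})$ denotes the $n\times 2n$ matrix obtained by concatenating $M$ and $M^{-1}$ side by side. Two $n\times n$ matrices $Z,Z'$ are equivalent if $Z'=PZQ$ for some $n\times n$ signed permutation matrices $P,Q$ (permutation matrices whose nonzero entries may be $\pm1$). *)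

theory Defs
  imports "HOL-Analysis.Analysis"
begin

definition unimodular :: "int^'n^'n \<Rightarrow> bool" where
  "unimodular A \<longleftrightarrow> det A = 1 \<or> det A = -1"

definition zerofree :: "int^'n^'n \<Rightarrow> bool" where
  "zerofree Z \<longleftrightarrow> invertible Z \<and> (\<forall>i j. Z$i$j \<noteq> 0) \<and> (\<forall>i j. matrix_inv Z $i$j \<noteq> 0)"

definition maxnorm :: "int^'n^'m \<Rightarrow> int" where
  "maxnorm A = Max {\<bar>A$i$j\<bar> | i j. True}"

text \<open>norm of the n x 2n matrix (M  M^-1)\<close>
definition pairnorm :: "int^'n^'n \<Rightarrow> int" where
  "pairnorm M = max (maxnorm M) (maxnorm (matrix_inv M))"

definition signed_perm :: "int^'n^'n \<Rightarrow> bool" where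
  "signed_perm P \<longleftrightarrow> (\<exists>p. bij p \<and> (\<forall>i j. (P$i$j \<noteq> 0 \<longleftrightarrow> j = p i) \<and> P$i$j \<in> {-1,0,1}))"

definition equivalent_mat :: "int^'n^'n \<Rightarrow> int^'n^'n \<Rightarrow> bool" where
  "equivalent_mat Z Z' \<longleftrightarrow> (\<exists>P Q. signed_perm P \<and> signed_perm Q \<and> Z' = P ** Z ** Q)"

definition M4 :: "int^4^4" where
  "M4 = vector [vector [1,1,1,2], vector [1,1,2,1], vector [1,2,2,2], vector [2,1,2,2]]"
definition M4inv :: "int^4^4" where
  "M4inv = vector [vector [-2,-2,1,2], vector [-2,-2,2,1], vector [1,2,-1,-1], vector [2,1,-1,-1]]"
definition Mt4 :: "int^4^4" where
  "Mt4 = vector [vector [1,1,1,2], vector [-1,1,2,-1], vector [-2,1,2,-2], vector [1,2,2,2]]"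
definition Mt4inv :: "int^4^4" where
  "Mt4inv = vector [vector [-2,2,-2,1], vector [-2,-2,1,2], vector [1,2,-1,-1], vector [2,-1,1,-1]]"

end

theory Submission imports Defs begin

lemma vector_4 [simp]:
 "(vector [a,b,c,d] ::('a::zero)^4)$1 = a"
 "(vector [a,b,c,d] ::('a::zero)^4)$2 = b"
 "(vector [a,b,c,d] ::('a::zero)^4)$3 = c"
 "(vector [a,b,c,d] ::('a::zero)^4)$4 = d"
  unfolding vector_def by simp_all

lemma matrix_inv_eq:
  fixes A B :: "'a::semiring_1^'n^'n"
  assumes "A ** B = mat 1" "B ** A = mat 1"
  shows "matrix_inv A = B"
proof -
  have "\<exists>A'. A ** A' = mat 1 \<and> A' ** A = mat 1" using assms by blast
  then have h: "A ** matrix_inv A = mat 1 \<and> matrix_inv A ** A = mat 1"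
    unfolding matrix_inv_def by (rule someI_ex)
  have "matrix_inv A = matrix_inv A ** (A ** B)" using assms by simp
  also have "\<dots> = B" using h by (simp add: matrix_mul_assoc)
  finally show ?thesis .
qed

lemma unimod_of_inv:
  fixes A B :: "int^'n^'n"
  assumes "A ** B = mat 1"
  shows "unimodular A"
proof -
  have "det A * det B = 1" using assms det_mul[of A B] by simp
  then show ?thesis unfolding unimodular_def using zmult_eq_1_iff by blast
qed

lemma maxnorm_ge:
  fixes A :: "int^'n^'m"
  shows "\<bar>A$i$j\<bar> \<le> maxnorm A"
proof -
  have "{\<bar>A$i$j\<bar> | i j. True} = (\<lambda>(i,j). \<bar>A$i$j\<bar>) ` UNIV" by auto
  then have "finite {\<bar>A$i$j\<bar> | i j. True}" by simp
  then show ?thesis unfolding maxnorm_def by (rule Max_ge) auto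
qed

lemma maxnorm_eq:
  fixes A :: "int^'n^'m"
  assumes "\<forall>i j. \<bar>A$i$j\<bar> \<le> c" "\<bar>A$a$b\<bar> = c"
  shows "maxnorm A = c"
proof -
  have "{\<bar>A$i$j\<bar> | i j. True} = (\<lambda>(i,j). \<bar>A$i$j\<bar>) ` UNIV" by auto
  then have "finite {\<bar>A$i$j\<bar> | i j. True}" by simp
  then show ?thesis unfolding maxnorm_def
    by (rule Max_eqI) (use assms in auto)
qed

lemma odd_sum:
  fixes f :: "'b \<Rightarrow> int"
  assumes "finite S" "\<forall>x\<in>S. odd (f x)"
  shows "even (sum f S) = even (card S)"
  using assms by (induction S rule: finite_induct) auto

lemma det_even:
  fixes A :: "int^4^4"
  assumes "\<forall>i j. odd (A$i$j)"
  shows "even (det A)"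
proof -
  let ?S = "{p. p permutes (UNIV::4 set)}"
  let ?f = "\<lambda>p. of_int (sign p) * prod (\<lambda>i. A$i$p i) (UNIV :: 4 set)"
  have c: "card ?S = fact 4"
    by (rule card_permutations) simp_all
  have "even (card ?S)" unfolding c by (simp add: fact_numeral)
  moreover have "\<forall>p\<in>?S. odd (?f p)"
  proof
    fix p :: "4 \<Rightarrow> 4"
    have "odd (sign p)" by (cases p rule: sign_cases) auto
    moreover have "odd (prod (\<lambda>i. A$i$p i) (UNIV :: 4 set))"
      using assms by (simp add: even_prod_iff)
    ultimately show "odd (?f p)" by simp
  qed
  then have "even (sum ?f ?S) = even (card ?S)"
    by (intro odd_sum finite_permutations) simp_all
  ultimately show ?thesis unfolding det_def by simp
qed

lemma part1:
  fixes M :: "int^4^4"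
  assumes "unimodular M" "zerofree M"
  shows "pairnorm M \<ge> 2"
proof (rule ccontr)
  assume "\<not> pairnorm M \<ge> 2"
  then have "maxnorm M \<le> 1" unfolding pairnorm_def by simp
  then have "\<forall>i j. odd (M$i$j)"
  proof (intro allI)
    fix i j
    have "\<bar>M$i$j\<bar> \<le> 1" using maxnorm_ge[of M i j] \<open>maxnorm M \<le> 1\<close> by simp
    moreover have "M$i$j \<noteq> 0" using assms(2) unfolding zerofree_def by blast
    ultimately have "M$i$j = 1 \<or> M$i$j = -1" by auto
    then show "odd (M$i$j)" by auto
  qed
  then have "even (det M)" by (rule det_even)
  then show False using assms(1) unfolding unimodular_def by auto
qed

lemma M4_mul1: "M4 ** M4inv = mat 1"
  unfolding vec_eq_iff forall_4
  by (simp add: M4_def M4inv_def matrix_matrix_mult_def sum_4 mat_def)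
lemma M4_mul2: "M4inv ** M4 = mat 1"
  unfolding vec_eq_iff forall_4
  by (simp add: M4_def M4inv_def matrix_matrix_mult_def sum_4 mat_def)
lemma Mt4_mul1: "Mt4 ** Mt4inv = mat 1"
  unfolding vec_eq_iff forall_4
  by (simp add: Mt4_def Mt4inv_def matrix_matrix_mult_def sum_4 mat_def)
lemma Mt4_mul2: "Mt4inv ** Mt4 = mat 1"
  unfolding vec_eq_iff forall_4
  by (simp add: Mt4_def Mt4inv_def matrix_matrix_mult_def sum_4 mat_def)

lemma M4_inv: "matrix_inv M4 = M4inv" using M4_mul1 M4_mul2 by (rule matrix_inv_eq)
lemma Mt4_inv: "matrix_inv Mt4 = Mt4inv" using Mt4_mul1 Mt4_mul2 by (rule matrix_inv_eq)

lemma M4_zf: "zerofree M4"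
  unfolding zerofree_def invertible_def M4_inv
  using M4_mul1 M4_mul2 by (auto simp: forall_4 M4_def M4inv_def)
lemma Mt4_zf: "zerofree Mt4"
  unfolding zerofree_def invertible_def Mt4_inv
  using Mt4_mul1 Mt4_mul2 by (auto simp: forall_4 Mt4_def Mt4inv_def)

lemma M4_norm: "pairnorm M4 = 2"
proof -
  have "maxnorm M4 = 2" by (rule maxnorm_eq[where a=1 and b=4]) (simp_all add: forall_4 M4_def)
  moreover have "maxnorm M4inv = 2" by (rule maxnorm_eq[where a=1 and b=1]) (simp_all add: forall_4 M4inv_def)
  ultimately show ?thesis unfolding pairnorm_def M4_inv by simp
qed
lemma Mt4_norm: "pairnorm Mt4 = 2"
proof -
  have "maxnorm Mt4 = 2" by (rule maxnorm_eq[where a=1 and b=4]) (simp_all add: forall_4 Mt4_def)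
  moreover have "maxnorm Mt4inv = 2" by (rule maxnorm_eq[where a=1 and b=1]) (simp_all add: forall_4 Mt4inv_def)
  ultimately show ?thesis unfolding pairnorm_def Mt4_inv by simp
qed

lemma sp_left:
  fixes P :: "int^'n^'n"
  assumes "signed_perm P"
  shows "\<exists>p s. (\<forall>i. s i = 1 \<or> s i = -1) \<and> (\<forall>(A::int^'k^'n) i j. (P ** A)$i$j = s i * A$(p i)$j)"
proof -
  obtain p where p: "\<forall>i j. (P$i$j \<noteq> 0 \<longleftrightarrow> j = p i) \<and> P$i$j \<in> {-1,0,1}"
    using assms unfolding signed_perm_def by blast
  have "\<forall>i. P$i$(p i) = 1 \<or> P$i$(p i) = -1" using p by fastforce
  moreover have "(P ** A)$i$j = P$i$(p i) * A$(p i)$j" for A :: "int^'k^'n" and i j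
  proof -
    have "(P ** A)$i$j = (\<Sum>k\<in>UNIV. P$i$k * A$k$j)" by (simp add: matrix_matrix_mult_def)
    also have "\<dots> = P$i$(p i) * A$(p i)$j + (\<Sum>k\<in>UNIV - {p i}. P$i$k * A$k$j)"
      by (rule sum.remove) auto
    also have "(\<Sum>k\<in>UNIV - {p i}. P$i$k * A$k$j) = 0"
      by (rule sum.neutral) (use p in auto)
    finally show ?thesis by simp
  qed
  ultimately show ?thesis by (intro exI[of _ p] exI[of _ "\<lambda>i. P$i$(p i)"]) auto
qed

lemma sp_right:
  fixes Q :: "int^'n^'n"
  assumes "signed_perm Q"
  shows "\<exists>r t. (\<forall>j. t j = 1 \<or> t j = -1) \<and> (\<forall>(A::int^'n^'k) i j. (A ** Q)$i$j = t j * A$i$(r j))"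
proof -
  obtain q where q: "bij q" "\<forall>i j. (Q$i$j \<noteq> 0 \<longleftrightarrow> j = q i) \<and> Q$i$j \<in> {-1,0,1}"
    using assms unfolding signed_perm_def by blast
  define r where "r = inv q"
  have qr: "q (r j) = j" for j unfolding r_def using q(1) by (simp add: bij_is_surj surj_f_inv_f)
  have rq: "k = r j \<longleftrightarrow> q k = j" for k j unfolding r_def using q(1) by (metis bij_inv_eq_iff)
  have "\<forall>j. Q$(r j)$j = 1 \<or> Q$(r j)$j = -1" using q(2) qr by fastforce
  moreover have "(A ** Q)$i$j = Q$(r j)$j * A$i$(r j)" for A :: "int^'n^'k" and i j
  proof -
    have "(A ** Q)$i$j = (\<Sum>k\<in>UNIV. A$i$k * Q$k$j)" by (simp add: matrix_matrix_mult_def)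
    also have "\<dots> = A$i$(r j) * Q$(r j)$j + (\<Sum>k\<in>UNIV - {r j}. A$i$k * Q$k$j)"
      by (rule sum.remove) auto
    also have "(\<Sum>k\<in>UNIV - {r j}. A$i$k * Q$k$j) = 0"
      by (rule sum.neutral) (use q(2) rq in auto)
    finally show ?thesis by simp
  qed
  ultimately show ?thesis by (intro exI[of _ r] exI[of _ "\<lambda>j. Q$(r j)$j"]) auto
qed

lemma sign_prod_pos:
  fixes s1 s2 t1 t2 m1 m2 m3 m4 :: int
  assumes "s1 = 1 \<or> s1 = -1" "s2 = 1 \<or> s2 = -1" "t1 = 1 \<or> t1 = -1" "t2 = 1 \<or> t2 = -1"
    "m1 > 0" "m2 > 0" "m3 > 0" "m4 > 0"
  shows "(t1 * (s1 * m1)) * (t2 * (s2 * m2)) * (t2 * (s1 * m3)) * (t1 * (s2 * m4)) > 0"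
proof -
  have e: "(t1 * (s1 * m1)) * (t2 * (s2 * m2)) * (t2 * (s1 * m3)) * (t1 * (s2 * m4))
     = (s1 * s1) * (s2 * s2) * (t1 * t1) * (t2 * t2) * (m1 * m2 * m3 * m4)" by (simp add: algebra_simps)
  have "s1 * s1 = 1" "s2 * s2 = 1" "t1 * t1 = 1" "t2 * t2 = 1" using assms(1-4) by auto
  then show ?thesis unfolding e using assms(5-8) by simp
qed

lemma not_equiv: "\<not> equivalent_mat M4 Mt4"
proof
  assume "equivalent_mat M4 Mt4"
  then obtain P Q where PQ: "signed_perm P" "signed_perm Q" "Mt4 = P ** M4 ** Q"
    unfolding equivalent_mat_def by blast
  obtain p s where ps: "\<forall>i. s i = 1 \<or> s i = -1" "\<forall>(A::int^4^4) i j. (P ** A)$i$j = s i * A$(p i)$j"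
    using sp_left[OF PQ(1)] by blast
  obtain r t where rt: "\<forall>j. t j = 1 \<or> t j = -1" "\<forall>(A::int^4^4) i j. (A ** Q)$i$j = t j * A$i$(r j)"
    using sp_right[OF PQ(2)] by blast
  have e: "Mt4$i$j = t j * (s i * M4$(p i)$(r j))" for i j
  proof -
    have "Mt4$i$j = t j * (P ** M4)$i$(r j)" unfolding PQ(3) using rt(2) by blast
    also have "(P ** M4)$i$(r j) = s i * M4$(p i)$(r j)" using ps(2) by blast
    finally show ?thesis .
  qed
  have pos: "M4$i$j > 0" for i j
  proof -
    have "\<forall>i j. M4$i$j > 0" by (simp add: forall_4 M4_def)
    then show ?thesis by blast
  qed
  have "Mt4$1$1 * Mt4$2$2 * Mt4$1$2 * Mt4$2$1 > 0"
    unfolding e by (rule sign_prod_pos) (use ps(1) rt(1) pos in auto)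
  moreover have "Mt4$1$1 * Mt4$2$2 * Mt4$1$2 * Mt4$2$1 = -1" by (simp add: Mt4_def)
  ultimately show False by simp
qed

theorem mainTheorem10:
  shows "(\<forall>M :: int^4^4. unimodular M \<and> zerofree M \<longrightarrow> pairnorm M \<ge> 2)
    \<and> unimodular M4 \<and> zerofree M4 \<and> matrix_inv M4 = M4inv \<and> pairnorm M4 = 2
    \<and> unimodular Mt4 \<and> zerofree Mt4 \<and> matrix_inv Mt4 = Mt4inv \<and> pairnorm Mt4 = 2
    \<and> \<not> equivalent_mat M4 Mt4"
  using part1 unimod_of_inv[OF M4_mul1] unimod_of_inv[OF Mt4_mul1] M4_zf Mt4_zf M4_inv Mt4_inv
    M4_norm Mt4_norm not_equiv by blast

end
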